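(* Let $p:X\to Y$ be a continuous map with overlay structure $\mathcal S$, and assume $X$ is connected. Let $G$ be the group of deck transformations of $p$ preserving $\mathcal S$. Then the action of $G$ on $X$ is an overlay action with overlay structure $\mathcal S$. Moreover, $p=q\circ\pi$, where $\pi:X\to X/G$ is the projection onto the orbit space (quotient topology) and $q:X/G\to Y$ is an overlay with overlay structure $\{\pi(U):U\in\mathcal S\}$.
   Context: A deck transformation of $p$ is a homeomorphism $h:X\to X$ with $p\circ h=p$; it preserves $\mathcal S$ if $h(U)\in\mathcal S$ for every $U\in\mathcal S$. For a continuous map $p:X\to Y$: a slice of $p$ is an open set $U\subseteq X$ such that $p^{-1}(p(U))$ is the disjoint union of a family of open sets $U_s$ ($s\in S$), each mapped by $p$ homeomorphically onto $p(U)$, with $U=U_t$ for some $t\in S$. A covering structure of $p$ is an open cover $\mathcal S$ of $X$ by slices of $p$ such that for every $U\in\mathcal S$, $p^{-1}(p(U))$ is the disjoint union of a family $\{U_j\}_{j\in J}$ of elements of $\mathcal S$, each mapped homeomorphically onto $p(U)$. For $x\in X$, $st(x,\mathcal S)=\bigcup\{U\in\mathcal S: x\in U\}$. An overlay structure of $p$ is a covering structure $\mathcal S$ such that $st(x,\mathcal S)$ is a slice of $p$ for every $x\in X$; $p$ is an overlay if it has one. For a free action of a group $G$ on $X$: a slice of the action is an open $U\subseteq X$ with $U\cap(g\cdot U)\neq\emptyset\Rightarrow g=1_G$. The action is an overlay action with overlay structure $\mathcal U$ if $\mathcal U$ is a covering structure of the projection $X\to X/G$ such that $st(x,\mathcal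 U)$ is a slice of the action for every $x\in X$. *)

theory Defs
  imports "HOL-Analysis.Analysis"
begin

text \<open>The disjoint family (U_s) is represented as a set of
  pairwise disjoint open sets (an indexed disjoint family of sets each homeomorphic
  to p(U) can only repeat the empty set, so nothing is lost).\<close>
definition slice_of :: "'a topology \<Rightarrow> 'b topology \<Rightarrow> ('a \<Rightarrow> 'b) \<Rightarrow> 'a set \<Rightarrow> bool" where
  "slice_of X Y p U \<longleftrightarrow> openin X U \<and>
     (\<exists>\<U>. U \<in> \<U> \<and> pairwise disjnt \<U> \<and>
        \<Union>\<U> = {x \<in> topspace X. p x \<in> p ` U} \<and>
        (\<forall>V\<in>\<U>. openin X V \<and> homeomorphic_map (subtopology X V) (subtopology Y (p ` U)) p))"

definition covering_structure :: "'a topology \<Rightarrow> 'b topology \<Rightarrow> ('a \<Rightarrow> 'b) \<Rightarrow> 'a set set \<Rightarrow> bool" where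
  "covering_structure X Y p \<S> \<longleftrightarrow>
     (\<forall>U\<in>\<S>. slice_of X Y p U) \<and> \<Union>\<S> = topspace X \<and>
     (\<forall>U\<in>\<S>. \<exists>\<U>. \<U> \<subseteq> \<S> \<and> pairwise disjnt \<U> \<and>
        \<Union>\<U> = {x \<in> topspace X. p x \<in> p ` U} \<and>
        (\<forall>V\<in>\<U>. homeomorphic_map (subtopology X V) (subtopology Y (p ` U)) p))"

definition star :: "'a \<Rightarrow> 'a set set \<Rightarrow> 'a set" where
  "star x \<S> = \<Union>{U \<in> \<S>. x \<in> U}"

definition overlay_structure :: "'a topology \<Rightarrow> 'b topology \<Rightarrow> ('a \<Rightarrow> 'b) \<Rightarrow> 'a set set \<Rightarrow> bool" where
  "overlay_structure X Y p \<S> \<longleftrightarrow>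
     covering_structure X Y p \<S> \<and> (\<forall>x\<in>topspace X. slice_of X Y p (star x \<S>))"

definition overlay_with :: "'a topology \<Rightarrow> 'b topology \<Rightarrow> ('a \<Rightarrow> 'b) \<Rightarrow> 'a set set \<Rightarrow> bool" where
  "overlay_with X Y p \<S> \<longleftrightarrow> continuous_map X Y p \<and> overlay_structure X Y p \<S>"

definition deck_preserving :: "'a topology \<Rightarrow> ('a \<Rightarrow> 'b) \<Rightarrow> 'a set set \<Rightarrow> ('a \<Rightarrow> 'a) set" where
  "deck_preserving X p \<S> = {h. homeomorphic_map X X h \<and> (\<forall>x\<in>topspace X. p (h x) = p x)
                                 \<and> (\<forall>U\<in>\<S>. h ` U \<in> \<S>)}"

text \<open>Group actions of a set of self-maps G of X (acting by evaluation). Two maps are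
  identified when they agree on topspace X; "g = 1" means g is the identity on X.\<close>
definition orbit_of :: "('a \<Rightarrow> 'a) set \<Rightarrow> 'a \<Rightarrow> 'a set" where
  "orbit_of G x = {g x |g. g \<in> G}"

definition quotient_top :: "'a topology \<Rightarrow> ('a \<Rightarrow> 'b) \<Rightarrow> 'b topology" where
  "quotient_top X f = topology (\<lambda>U. U \<subseteq> f ` topspace X \<and> openin X {x \<in> topspace X. f x \<in> U})"

lemma istopology_quotient:
  "istopology (\<lambda>U. U \<subseteq> f ` topspace X \<and> openin X {x \<in> topspace X. f x \<in> U})"
  unfolding istopology_def
proof (rule conjI; intro allI impI)
  fix S T assume S: "S \<subseteq> f ` topspace X \<and> openin X {x \<in> topspace X. f x \<in> S}"
    and T: "T \<subseteq> f ` topspace X \<and> openin X {x \<in> topspace X. f x \<in> T}"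
  have "{x \<in> topspace X. f x \<in> S \<inter> T} = {x \<in> topspace X. f x \<in> S} \<inter> {x \<in> topspace X. f x \<in> T}"
    by auto
  then show "S \<inter> T \<subseteq> f ` topspace X \<and> openin X {x \<in> topspace X. f x \<in> S \<inter> T}"
    using S T by auto
next
  fix K assume K: "\<forall>S\<in>K. S \<subseteq> f ` topspace X \<and> openin X {x \<in> topspace X. f x \<in> S}"
  have "{x \<in> topspace X. f x \<in> \<Union>K} = (\<Union>S\<in>K. {x \<in> topspace X. f x \<in> S})" by auto
  then show "\<Union>K \<subseteq> f ` topspace X \<and> openin X {x \<in> topspace X. f x \<in> \<Union>K}"
    using K by (auto intro!: openin_Union)
qed

lemma openin_quotient_top:
  "openin (quotient_top X f) U \<longleftrightarrow> U \<subseteq> f ` topspace X \<and> openin X {x \<in> topspace X. f x \<in> U}"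
  unfolding quotient_top_def by (simp add: topology_inverse'[OF istopology_quotient])

definition orbit_space :: "'a topology \<Rightarrow> ('a \<Rightarrow> 'a) set \<Rightarrow> 'a set topology" where
  "orbit_space X G = quotient_top X (orbit_of G)"

definition free_action :: "'a topology \<Rightarrow> ('a \<Rightarrow> 'a) set \<Rightarrow> bool" where
  "free_action X G \<longleftrightarrow> (\<forall>g\<in>G. \<forall>x\<in>topspace X. g x = x \<longrightarrow> (\<forall>y\<in>topspace X. g y = y))"

definition action_slice :: "'a topology \<Rightarrow> ('a \<Rightarrow> 'a) set \<Rightarrow> 'a set \<Rightarrow> bool" where
  "action_slice X G U \<longleftrightarrow> openin X U \<and>
     (\<forall>g\<in>G. U \<inter> g ` U \<noteq> {} \<longrightarrow> (\<forall>y\<in>topspace X. g y = y))"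

definition overlay_action :: "'a topology \<Rightarrow> ('a \<Rightarrow> 'a) set \<Rightarrow> 'a set set \<Rightarrow> bool" where
  "overlay_action X G \<U> \<longleftrightarrow> free_action X G \<and>
     covering_structure X (orbit_space X G) (orbit_of G) \<U> \<and>
     (\<forall>x\<in>topspace X. action_slice X G (star x \<U>))"

end

theory Submission
  imports Defs
begin


locale ovl =
  fixes X :: "'a topology" and Y :: "'b topology" and p :: "'a \<Rightarrow> 'b" and S :: "'a set set"
  assumes ov: "overlay_with X Y p S" and conn: "connected_space X"
begin

abbreviation "G \<equiv> deck_preserving X p S"
abbreviation "orb \<equiv> orbit_of G"
abbreviation "XG \<equiv> orbit_space X G"

lemma contp: "continuous_map X Y p" using ov by (simp add: overlay_with_def)
lemma cov: "covering_structure X Y p S" using ov by (simp add: overlay_with_def overlay_structure_def)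
lemma starslice: "x \<in> topspace X \<Longrightarrow> slice_of X Y p (star x S)"
  using ov by (simp add: overlay_with_def overlay_structure_def)

lemma S_open: "U \<in> S \<Longrightarrow> openin X U"
  using cov by (auto simp: covering_structure_def slice_of_def)
lemma S_sub: "U \<in> S \<Longrightarrow> U \<subseteq> topspace X"
  using S_open openin_subset by blast
lemma S_cover: "\<Union>S = topspace X" using cov by (simp add: covering_structure_def)

lemma star_sub: "star x S \<subseteq> topspace X" using S_sub by (auto simp: star_def)
lemma star_mem: "U \<in> S \<Longrightarrow> x \<in> U \<Longrightarrow> U \<subseteq> star x S" by (auto simp: star_def)

lemma slice_hom: assumes "slice_of X Y p U"
  shows "homeomorphic_map (subtopology X U) (subtopology Y (p ` U)) p"
  using assms by (auto simp: slice_of_def)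

lemma star_hom: "x \<in> topspace X \<Longrightarrow>
   homeomorphic_map (subtopology X (star x S)) (subtopology Y (p ` star x S)) p"
  using slice_hom starslice by blast

lemma star_inj: "x \<in> topspace X \<Longrightarrow> inj_on p (star x S)"
proof -
  assume x: "x \<in> topspace X"
  have "topspace X \<inter> star x S = star x S" using star_sub by blast
  then show ?thesis using homeomorphic_imp_injective_map[OF star_hom[OF x]] by simp
qed

lemma sub_star_hom: assumes x: "x \<in> topspace X" and B: "B \<subseteq> star x S"
  shows "homeomorphic_map (subtopology X B) (subtopology Y (p ` B)) p"
proof -
  have Bt: "B \<subseteq> topspace X" using B star_sub by blast
  have pB: "p ` B \<subseteq> topspace Y" using Bt contp continuous_map_image_subset_topspace by blast
  have "homeomorphic_map (subtopology (subtopology X (star x S)) B) (subtopology (subtopology Y (p ` star x S)) (p ` B)) p"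
    apply (rule homeomorphic_map_subtopologies[OF star_hom[OF x]])
    using Bt pB B by auto
  moreover have "star x S \<inter> B = B" "p ` star x S \<inter> p ` B = p ` B" using B by auto
  ultimately show ?thesis by (simp add: subtopology_subtopology)
qed

lemma uniq: assumes "A \<in> S" "B \<in> S" "A \<inter> B \<noteq> {}" "p ` A = p ` B" shows "A = B"
proof -
  obtain z where z: "z \<in> A" "z \<in> B" using assms by blast
  have zt: "z \<in> topspace X" using z S_sub assms by blast
  have AB: "A \<subseteq> star z S" "B \<subseteq> star z S" using star_mem assms z by auto
  have inj: "inj_on p (star z S)" using star_inj zt .
  show ?thesis
  proof
    show "A \<subseteq> B"
    proof
      fix a assume a: "a \<in> A"
      have "p a \<in> p ` B" using a assms(4) by blast
      then obtain b where "b \<in> B" "p b = p a" by auto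
      then show "a \<in> B" using inj AB a by (metis inj_on_def subsetD)
    qed
    show "B \<subseteq> A"
    proof
      fix b assume b: "b \<in> B"
      have "p b \<in> p ` A" using b assms(4) by blast
      then obtain a where "a \<in> A" "p a = p b" by auto
      then show "b \<in> A" using inj AB b by (metis inj_on_def subsetD)
    qed
  qed
qed

lemma sheets: assumes U: "U \<in> S"
  obtains \<U> where "\<U> \<subseteq> S" "pairwise disjnt \<U>" "\<Union>\<U> = {x \<in> topspace X. p x \<in> p ` U}"
    "\<And>V. V \<in> \<U> \<Longrightarrow> p ` V = p ` U"
    "\<And>W. W \<in> S \<Longrightarrow> W \<noteq> {} \<Longrightarrow> p ` W = p ` U \<Longrightarrow> W \<in> \<U>"
proof -
  have "\<forall>U\<in>S. \<exists>\<U>. \<U> \<subseteq> S \<and> pairwise disjnt \<U> \<and>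
        \<Union>\<U> = {x \<in> topspace X. p x \<in> p ` U} \<and>
        (\<forall>V\<in>\<U>. homeomorphic_map (subtopology X V) (subtopology Y (p ` U)) p)"
    using cov unfolding covering_structure_def by (rule conjunct2[OF conjunct2])
  then have "\<exists>\<U>. \<U> \<subseteq> S \<and> pairwise disjnt \<U> \<and>
        \<Union>\<U> = {x \<in> topspace X. p x \<in> p ` U} \<and>
        (\<forall>V\<in>\<U>. homeomorphic_map (subtopology X V) (subtopology Y (p ` U)) p)"
    using U by (rule bspec)
  then obtain \<U> where U1: "\<U> \<subseteq> S" "pairwise disjnt \<U>" "\<Union>\<U> = {x \<in> topspace X. p x \<in> p ` U}"
     and hom: "\<forall>V\<in>\<U>. homeomorphic_map (subtopology X V) (subtopology Y (p ` U)) p"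
    by (elim exE conjE)
  have pU: "p ` U \<subseteq> topspace Y" using S_sub[OF U] contp continuous_map_image_subset_topspace by blast
  have img: "p ` V = p ` U" if V: "V \<in> \<U>" for V
  proof -
    have "p ` (topspace X \<inter> V) = topspace Y \<inter> p ` U"
      using homeomorphic_imp_surjective_map[OF hom[rule_format, OF V]] by simp
    moreover have "topspace X \<inter> V = V" using S_sub V U1(1) by blast
    ultimately show ?thesis using pU by auto
  qed
  have mem: "W \<in> \<U>" if W: "W \<in> S" "W \<noteq> {}" "p ` W = p ` U" for W
  proof -
    obtain w where w: "w \<in> W" using W by blast
    have "w \<in> \<Union>\<U>" using w W S_sub U1(3) by auto
    then obtain V where V: "V \<in> \<U>" "w \<in> V" by blast
    have "V \<in> S" using V U1(1) by blast
    then have "V = W" using uniq[of V W] V w W img[OF V(1)] by blast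
    then show ?thesis using V by simp
  qed
  show ?thesis by (rule that[OF U1(1) U1(2) U1(3) img mem])
qed

lemma U_star_hom: "U \<in> S \<Longrightarrow> U \<noteq> {} \<Longrightarrow> homeomorphic_map (subtopology X U) (subtopology Y (p ` U)) p"
proof -
  assume U: "U \<in> S" "U \<noteq> {}"
  then obtain u where u: "u \<in> U" by blast
  have "u \<in> topspace X" using u U S_sub by blast
  then show ?thesis using sub_star_hom star_mem[OF U(1) u] by blast
qed

lemma U_inj: "U \<in> S \<Longrightarrow> inj_on p U"
proof -
  assume U: "U \<in> S"
  show ?thesis
  proof (cases "U = {}")
    case False
    then obtain u where u: "u \<in> U" by blast
    have "u \<in> topspace X" using u U S_sub by blast
    then show ?thesis using star_inj star_mem[OF U u] inj_on_subset by blast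
  qed simp
qed

end

context ovl begin

lemma Gmem: "g \<in> G \<longleftrightarrow> homeomorphic_map X X g \<and> (\<forall>x\<in>topspace X. p (g x) = p x) \<and> (\<forall>U\<in>S. g ` U \<in> S)"
  by (simp add: deck_preserving_def)

lemma G_top: "g \<in> G \<Longrightarrow> x \<in> topspace X \<Longrightarrow> g x \<in> topspace X"
  using Gmem homeomorphic_imp_surjective_map by blast

lemma G_p: "g \<in> G \<Longrightarrow> x \<in> topspace X \<Longrightarrow> p (g x) = p x"
  using Gmem by blast

lemma G_S: "g \<in> G \<Longrightarrow> U \<in> S \<Longrightarrow> g ` U \<in> S"
  using Gmem by blast

lemma G_cont: "g \<in> G \<Longrightarrow> continuous_map X X g"
  using Gmem homeomorphic_imp_continuous_map by blast

lemma G_pimg: "g \<in> G \<Longrightarrow> U \<subseteq> topspace X \<Longrightarrow> p ` (g ` U) = p ` U"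
proof -
  assume g: "g \<in> G" and U: "U \<subseteq> topspace X"
  have "\<forall>x\<in>U. p (g x) = p x" using G_p[OF g] U by blast
  then show ?thesis by (simp add: image_image)
qed

lemma G_id: "(\<lambda>x. x) \<in> G"
proof -
  have "homeomorphic_map X X id" by simp
  then show ?thesis by (simp add: Gmem id_def)
qed

lemma G_comp: assumes "g \<in> G" "h \<in> G" shows "(\<lambda>x. g (h x)) \<in> G"
proof -
  have "homeomorphic_map X X (g \<circ> h)"
    using homeomorphic_map_compose assms Gmem by blast
  moreover have "(g \<circ> h) = (\<lambda>x. g (h x))" by auto
  moreover have "\<forall>x\<in>topspace X. p (g (h x)) = p x" using assms G_p G_top by metis
  moreover have "\<forall>U\<in>S. (\<lambda>x. g (h x)) ` U \<in> S"
    using assms G_S by (metis image_image)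
  ultimately show ?thesis by (simp add: Gmem)
qed

lemma G_inv: assumes g: "g \<in> G"
  obtains k where "k \<in> G" "\<And>x. x \<in> topspace X \<Longrightarrow> k (g x) = x" "\<And>x. x \<in> topspace X \<Longrightarrow> g (k x) = x"
proof -
  obtain k where hk: "homeomorphic_maps X X g k"
    using g Gmem homeomorphic_map_maps by blast
  then have kh: "homeomorphic_map X X k" and kg: "\<forall>x\<in>topspace X. k (g x) = x"
    and gk: "\<forall>x\<in>topspace X. g (k x) = x"
    by (auto simp: homeomorphic_maps_map)
  have ktop: "k x \<in> topspace X" if "x \<in> topspace X" for x
    using kh homeomorphic_imp_surjective_map that by blast
  have kp: "\<forall>x\<in>topspace X. p (k x) = p x"
    using gk ktop G_p g by metis
  have kS: "k ` U \<in> S" if U: "U \<in> S" for U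
  proof (cases "U = {}")
    case True then show ?thesis using U by simp
  next
    case False
    then obtain u where u: "u \<in> U" by blast
    have ut: "u \<in> topspace X" using u U S_sub by blast
    obtain \<U> where sh: "\<U> \<subseteq> S" "pairwise disjnt \<U>" "\<Union>\<U> = {x \<in> topspace X. p x \<in> p ` U}"
      "\<And>V. V \<in> \<U> \<Longrightarrow> p ` V = p ` U"
      using sheets[OF U] by metis
    have "k u \<in> \<Union>\<U>" using sh(3) ktop ut kp u by auto
    then obtain V where V: "V \<in> \<U>" "k u \<in> V" by blast
    have VS: "V \<in> S" using V sh by blast
    have gV: "g ` V \<in> S" using G_S g VS by blast
    have "u \<in> g ` V" using V gk ut by (metis imageI)
    moreover have "p ` (g ` V) = p ` U" using G_pimg[OF g S_sub[OF VS]] sh(4)[OF V(1)] by simp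
    ultimately have "g ` V = U" using uniq[OF gV U] u by blast
    moreover have "\<forall>v\<in>V. k (g v) = v" using kg S_sub[OF VS] by blast
    ultimately have "k ` U = V" by (metis (no_types, lifting) image_cong image_ident image_image)
    then show ?thesis using VS by simp
  qed
  have "k \<in> G" using kh kp kS by (simp add: Gmem)
  then show ?thesis using that kg gk by blast
qed

lemma G_fix: assumes g: "g \<in> G" and x: "x \<in> topspace X" "g x = x" and y: "y \<in> topspace X"
  shows "g y = y"
proof -
  define F where "F = {y \<in> topspace X. g y = y}"
  have opF: "openin X F"
    unfolding openin_subopen[of X F]
  proof
    fix z assume z: "z \<in> F"
    then have zt: "z \<in> topspace X" and gz: "g z = z" by (auto simp: F_def)
    obtain U where U: "U \<in> S" "z \<in> U" using S_cover zt by blast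
    have gU: "g ` U \<in> S" using G_S g U by blast
    have zg: "z \<in> g ` U" using U(2) gz by (metis imageI)
    have sub: "U \<subseteq> star z S" "g ` U \<subseteq> star z S"
      using star_mem[OF U(1,2)] star_mem[OF gU zg] by auto
    have "U \<subseteq> F"
    proof
      fix u assume u: "u \<in> U"
      have ut: "u \<in> topspace X" using u U S_sub by blast
      have a: "g u \<in> star z S" using sub(2) u by blast
      have b: "u \<in> star z S" using sub(1) u by blast
      have "g u = u" by (rule inj_onD[OF star_inj[OF zt] G_p[OF g ut] a b])
      then show "u \<in> F" using ut by (simp add: F_def)
    qed
    then show "\<exists>T. openin X T \<and> z \<in> T \<and> T \<subseteq> F" using S_open U by blast
  qed
  have opC: "openin X (topspace X - F)"
    unfolding openin_subopen[of X "topspace X - F"]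
  proof
    fix z assume z: "z \<in> topspace X - F"
    then have zt: "z \<in> topspace X" and gz: "g z \<noteq> z" by (auto simp: F_def)
    obtain U where U: "U \<in> S" "z \<in> U" using S_cover zt by blast
    obtain \<U> where sh: "\<U> \<subseteq> S" "pairwise disjnt \<U>" "\<Union>\<U> = {x \<in> topspace X. p x \<in> p ` U}"
      "\<And>V. V \<in> \<U> \<Longrightarrow> p ` V = p ` U"
      using sheets[OF U(1)] by metis
    obtain V1 where V1: "V1 \<in> \<U>" "z \<in> V1" using sh(3) zt U by blast
    have "g z \<in> \<Union>\<U>" using sh(3) G_top[OF g zt] G_p[OF g zt] U by auto
    then obtain V2 where V2: "V2 \<in> \<U>" "g z \<in> V2" by blast
    define T where "T = {w \<in> V1. g w \<in> V2}"
    have opT: "openin X T" unfolding T_def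
      apply (rule openin_continuous_map_preimage_gen[OF G_cont[OF g]])
      using V1 V2 sh(1) S_open by auto
    have "T \<subseteq> topspace X - F"
    proof
      fix w assume w: "w \<in> T"
      then have wt: "w \<in> topspace X" using opT openin_subset by blast
      have "g w \<noteq> w"
      proof
        assume gw: "g w = w"
        have "w \<in> V1" "g w \<in> V2" using w by (auto simp: T_def)
        then have "\<not> disjnt V1 V2" using gw by (auto simp: disjnt_def)
        then have "V1 = V2" using sh(2) V1(1) V2(1) unfolding pairwise_def by blast
        then have gzV: "g z \<in> V1" using V2 by simp
        have V1S: "V1 \<in> S" using V1 sh(1) by blast
        have "g z = z" by (rule inj_onD[OF U_inj[OF V1S] G_p[OF g zt] gzV V1(2)])
        then show False using gz by simp
      qed
      then show "w \<in> topspace X - F" using wt by (simp add: F_def)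
    qed
    moreover have "z \<in> T" using V1 V2 by (simp add: T_def)
    ultimately show "\<exists>T. openin X T \<and> z \<in> T \<and> T \<subseteq> topspace X - F" using opT by blast
  qed
  have clF: "closedin X F" using opC by (simp add: closedin_def F_def)
  have "F = {} \<or> F = topspace X" using conn opF clF unfolding connected_space_clopen_in by blast
  moreover have "x \<in> F" using x by (simp add: F_def)
  ultimately show ?thesis using y by (auto simp: F_def)
qed

lemma inj_free: assumes A: "A \<subseteq> topspace X" "inj_on p A" and g: "g \<in> G" and a: "a \<in> A" "g a \<in> A"
   and y: "y \<in> topspace X" shows "g y = y"
proof -
  have "a \<in> topspace X" using a A by blast
  then have "g a = a" using inj_onD[OF A(2) G_p[OF g]] a by blast
  then show ?thesis using G_fix g a y A by blast
qed

end

context ovl begin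

lemma orb_def': "orb x = {g x |g. g \<in> G}" by (simp add: orbit_of_def)

lemma orbI: "g \<in> G \<Longrightarrow> g x \<in> orb x" by (auto simp: orb_def')

lemma orb_self: "x \<in> orb x"
  using orbI[OF G_id, of x] by simp

lemma orb_G: assumes g: "g \<in> G" and x: "x \<in> topspace X" shows "orb (g x) = orb x"
proof
  show "orb (g x) \<subseteq> orb x"
  proof
    fix y assume "y \<in> orb (g x)"
    then obtain h where h: "h \<in> G" "y = h (g x)" unfolding orb_def' by blast
    have "(\<lambda>x. h (g x)) \<in> G" using G_comp h g by blast
    then show "y \<in> orb x" using orbI h by metis
  qed
  show "orb x \<subseteq> orb (g x)"
  proof
    fix y assume "y \<in> orb x"
    then obtain h where h: "h \<in> G" "y = h x" unfolding orb_def' by blast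
    obtain k where k: "k \<in> G" "\<And>x. x \<in> topspace X \<Longrightarrow> k (g x) = x" using G_inv[OF g] by metis
    have hk: "(\<lambda>x. h (k x)) \<in> G" using G_comp h k by blast
    have "y = h (k (g x))" using k(2)[OF x] h by simp
    then show "y \<in> orb (g x)" using orbI[OF hk, of "g x"] by simp
  qed
qed

lemma orb_eq: assumes x: "x \<in> topspace X" and y: "y \<in> topspace X"
  shows "orb x = orb y \<longleftrightarrow> (\<exists>g\<in>G. y = g x)"
proof
  assume "orb x = orb y"
  then have "y \<in> orb x" using orb_self by metis
  then show "\<exists>g\<in>G. y = g x" unfolding orb_def' by blast
next
  assume "\<exists>g\<in>G. y = g x"
  then obtain g where "g \<in> G" "y = g x" by blast
  then show "orb x = orb y" using orb_G x by metis
qed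

lemma preim: assumes A: "A \<subseteq> topspace X"
  shows "{x \<in> topspace X. orb x \<in> orb ` A} = \<Union>{g ` A |g. g \<in> G}"
proof
  show "{x \<in> topspace X. orb x \<in> orb ` A} \<subseteq> \<Union>{g ` A |g. g \<in> G}"
  proof
    fix x assume "x \<in> {x \<in> topspace X. orb x \<in> orb ` A}"
    then obtain a where xa: "x \<in> topspace X" "a \<in> A" "orb x = orb a" by blast
    then have "a \<in> topspace X" using A by blast
    then obtain g where "g \<in> G" "x = g a" using orb_eq xa by metis
    then show "x \<in> \<Union>{g ` A |g. g \<in> G}" using xa by blast
  qed
  show "\<Union>{g ` A |g. g \<in> G} \<subseteq> {x \<in> topspace X. orb x \<in> orb ` A}"
  proof
    fix x assume "x \<in> \<Union>{g ` A |g. g \<in> G}"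
    then obtain g a where ga: "g \<in> G" "a \<in> A" "x = g a" by blast
    have at: "a \<in> topspace X" using ga A by blast
    have "x \<in> topspace X" using G_top ga at by blast
    moreover have "orb x = orb a" using orb_G ga at by blast
    ultimately show "x \<in> {x \<in> topspace X. orb x \<in> orb ` A}" using ga by blast
  qed
qed

lemma XG_open: "openin XG W \<longleftrightarrow> W \<subseteq> orb ` topspace X \<and> openin X {x \<in> topspace X. orb x \<in> W}"
  by (simp add: orbit_space_def openin_quotient_top)

lemma top_XG: "topspace XG = orb ` topspace X"
proof
  show "topspace XG \<subseteq> orb ` topspace X" using XG_open[of "topspace XG"] by simp
  have "{x \<in> topspace X. orb x \<in> orb ` topspace X} = topspace X" by blast
  then have "openin XG (orb ` topspace X)" using XG_open by simp
  then show "orb ` topspace X \<subseteq> topspace XG" by (rule openin_subset)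
qed

lemma open_orb: assumes A: "openin X A" shows "openin XG (orb ` A)"
proof -
  have At: "A \<subseteq> topspace X" using A openin_subset by blast
  have "openin X (\<Union>{g ` A |g. g \<in> G})"
  proof (rule openin_Union)
    fix B assume "B \<in> {g ` A |g. g \<in> G}"
    then obtain g where g: "g \<in> G" "B = g ` A" by blast
    have "homeomorphic_map X X g" using g Gmem by blast
    then show "openin X B" using g A homeomorphic_map_openness_eq by blast
  qed
  then have "openin X {x \<in> topspace X. orb x \<in> orb ` A}" using preim[OF At] by simp
  moreover have "orb ` A \<subseteq> orb ` topspace X" using At by blast
  ultimately show ?thesis using XG_open by blast
qed

lemma cont_orb: "continuous_map X XG orb"
  unfolding continuous_map_def
proof
  show "orb \<in> topspace X \<rightarrow> topspace XG" using top_XG by blast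
  show "\<forall>U. openin XG U \<longrightarrow> openin X {x \<in> topspace X. orb x \<in> U}" using XG_open by blast
qed

lemma HP: assumes V: "openin X V" "inj_on p V"
  shows "homeomorphic_map (subtopology X V) (subtopology XG (orb ` V)) orb"
proof (rule bijective_open_imp_homeomorphic_map)
  have Vt: "V \<subseteq> topspace X" using V openin_subset by blast
  have tV: "topspace (subtopology X V) = V" using Vt by auto
  show "continuous_map (subtopology X V) (subtopology XG (orb ` V)) orb"
    apply (rule continuous_map_into_subtopology[OF continuous_map_from_subtopology[OF cont_orb]])
    using tV by auto
  show "open_map (subtopology X V) (subtopology XG (orb ` V)) orb"
    unfolding open_map_def
  proof (intro allI impI)
    fix W assume "openin (subtopology X V) W"
    then have O: "openin X W" "W \<subseteq> V" using openin_open_subtopology[OF V(1)] by auto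
    have "openin XG (orb ` W)" using open_orb[OF O(1)] .
    moreover have "orb ` W \<subseteq> orb ` V" using O by blast
    ultimately show "openin (subtopology XG (orb ` V)) (orb ` W)"
      using openin_open_subtopology[OF open_orb[OF V(1)]] by blast
  qed
  show "orb ` topspace (subtopology X V) = topspace (subtopology XG (orb ` V))"
    using tV top_XG Vt by auto
  show "inj_on orb (topspace (subtopology X V))"
    unfolding tV inj_on_def
  proof (intro ballI impI)
    fix a b assume ab: "a \<in> V" "b \<in> V" "orb a = orb b"
    have abt: "a \<in> topspace X" "b \<in> topspace X" using ab Vt by auto
    then obtain g where g: "g \<in> G" "b = g a" using orb_eq ab by metis
    have "g a = a" using inj_free[OF Vt V(2) g(1) ab(1)] g ab(2) abt by blast
    then show "a = b" using g by simp
  qed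
qed

end

context ovl begin

lemma fam_disj: assumes U: "U \<in> S" shows "pairwise disjnt {g ` U |g. g \<in> G}"
  unfolding pairwise_def
proof (intro ballI impI)
  fix A B assume A: "A \<in> {g ` U |g. g \<in> G}" and B: "B \<in> {g ` U |g. g \<in> G}" and ne: "A \<noteq> B"
  obtain g where g: "g \<in> G" "A = g ` U" using A by blast
  obtain h where h: "h \<in> G" "B = h ` U" using B by blast
  show "disjnt A B"
  proof (rule ccontr)
    assume "\<not> disjnt A B"
    then obtain a b where ab: "a \<in> U" "b \<in> U" "g a = h b" using g h by (auto simp: disjnt_def)
    obtain k where k: "k \<in> G" "\<And>x. x \<in> topspace X \<Longrightarrow> k (h x) = x" "\<And>x. x \<in> topspace X \<Longrightarrow> h (k x) = x"
      using G_inv[OF h(1)] by metis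
    have m: "(\<lambda>x. k (g x)) \<in> G" using G_comp k(1) g(1) by blast
    have bt: "b \<in> topspace X" using ab S_sub U by blast
    have "k (g a) = b" using ab(3) k(2)[OF bt] by simp
    then have mab: "(\<lambda>x. k (g x)) a \<in> U" using ab by simp
    have "\<forall>y\<in>U. g y = h y"
    proof
      fix y assume y: "y \<in> U"
      have yt: "y \<in> topspace X" using y S_sub U by blast
      have "k (g y) = y" using inj_free[OF S_sub[OF U] U_inj[OF U] m ab(1) mab yt] by simp
      then have "h (k (g y)) = h y" by simp
      then show "g y = h y" using k(3)[OF G_top[OF g(1) yt]] by simp
    qed
    then have "A = B" using g h by (simp cong: image_cong)
    then show False using ne by simp
  qed
qed

lemma fam_props: assumes U: "U \<in> S"
  shows "U \<in> {g ` U |g. g \<in> G}" "{g ` U |g. g \<in> G} \<subseteq> S"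
    "\<Union>{g ` U |g. g \<in> G} = {x \<in> topspace X. orb x \<in> orb ` U}"
    "\<And>V. V \<in> {g ` U |g. g \<in> G} \<Longrightarrow> openin X V \<and> homeomorphic_map (subtopology X V) (subtopology XG (orb ` U)) orb"
proof -
  show "U \<in> {g ` U |g. g \<in> G}" by (rule CollectI, rule exI[of _ "\<lambda>x. x"]) (simp add: G_id)
  show "{g ` U |g. g \<in> G} \<subseteq> S" using G_S U by blast
  show "\<Union>{g ` U |g. g \<in> G} = {x \<in> topspace X. orb x \<in> orb ` U}" using preim[OF S_sub[OF U]] by simp
  fix V assume "V \<in> {g ` U |g. g \<in> G}"
  then obtain g where g: "g \<in> G" "V = g ` U" by blast
  have VS: "V \<in> S" using G_S g U by blast
  have "orb ` V = orb ` U"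
  proof -
    have "\<forall>x\<in>U. orb (g x) = orb x" using orb_G g(1) S_sub[OF U] by blast
    then show ?thesis using g(2) by (simp add: image_image cong: image_cong)
  qed
  then show "openin X V \<and> homeomorphic_map (subtopology X V) (subtopology XG (orb ` U)) orb"
    using HP[OF S_open[OF VS] U_inj[OF VS]] S_open[OF VS] by simp
qed

lemma partA: "overlay_action X G S"
proof -
  have free: "free_action X G" unfolding free_action_def
    by (intro ballI impI, rule G_fix) auto
  have sl: "slice_of X XG orb U" if U: "U \<in> S" for U
    unfolding slice_of_def
    apply (rule conjI[OF S_open[OF U]])
    apply (rule exI[of _ "{g ` U |g. g \<in> G}"])
    apply (intro conjI ballI)
    using fam_props[OF U] fam_disj[OF U] by auto
  have cv: "\<exists>\<U>. \<U> \<subseteq> S \<and> pairwise disjnt \<U> \<and>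
        \<Union>\<U> = {x \<in> topspace X. orb x \<in> orb ` U} \<and>
        (\<forall>V\<in>\<U>. homeomorphic_map (subtopology X V) (subtopology XG (orb ` U)) orb)" if U: "U \<in> S" for U
    apply (rule exI[of _ "{g ` U |g. g \<in> G}"])
    apply (intro conjI ballI)
    using fam_props[OF U] fam_disj[OF U] by auto
  have cs: "covering_structure X XG orb S"
    unfolding covering_structure_def
    apply (intro conjI ballI)
      apply (erule sl)
     apply (rule S_cover)
    apply (erule cv)
    done
  have st: "action_slice X G (star x S)" if x: "x \<in> topspace X" for x
    unfolding action_slice_def
  proof
    show "openin X (star x S)" unfolding star_def by (rule openin_Union) (simp add: S_open)
    show "\<forall>g\<in>G. star x S \<inter> g ` star x S \<noteq> {} \<longrightarrow> (\<forall>y\<in>topspace X. g y = y)"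
    proof (intro ballI impI)
      fix g y assume g: "g \<in> G" and ne: "star x S \<inter> g ` star x S \<noteq> {}" and y: "y \<in> topspace X"
      then obtain w where w: "w \<in> star x S" "g w \<in> star x S" by blast
      show "g y = y" by (rule inj_free[OF star_sub star_inj[OF x] g w y])
    qed
  qed
  show ?thesis unfolding overlay_action_def
    by (intro conjI ballI free cs st)
qed

end


definition qmap :: "('a \<Rightarrow> 'b) \<Rightarrow> 'a set \<Rightarrow> 'b" where
  "qmap p Ob = p (SOME x. x \<in> Ob)"

context ovl begin

abbreviation "q \<equiv> qmap p"

lemma q_orb: assumes x: "x \<in> topspace X" shows "q (orb x) = p x"
proof -
  have "(SOME y. y \<in> orb x) \<in> orb x" using orb_self by (rule someI)
  then obtain g where g: "g \<in> G" "(SOME y. y \<in> orb x) = g x" unfolding orb_def' by blast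
  show ?thesis unfolding qmap_def g(2) using G_p[OF g(1) x] .
qed

lemma q_img: assumes A: "A \<subseteq> topspace X" shows "q ` (orb ` A) = p ` A"
proof -
  have "\<forall>x\<in>A. q (orb x) = p x" using q_orb A by blast
  then show ?thesis by (simp add: image_image cong: image_cong)
qed

lemma q_cont: "continuous_map XG Y q"
  unfolding continuous_map_def
proof (intro conjI allI impI)
  show "q \<in> topspace XG \<rightarrow> topspace Y"
  proof
    fix Ob assume "Ob \<in> topspace XG"
    then obtain x where x: "x \<in> topspace X" "Ob = orb x" using top_XG by blast
    then show "q Ob \<in> topspace Y" using q_orb contp continuous_map_image_subset_topspace by fastforce
  qed
  fix W assume W: "openin Y W"
  have eq: "{x \<in> topspace X. orb x \<in> {Ob \<in> topspace XG. q Ob \<in> W}} = {x \<in> topspace X. p x \<in> W}"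
    using top_XG q_orb by auto
  have "openin X {x \<in> topspace X. p x \<in> W}" using openin_continuous_map_preimage[OF contp W] .
  then show "openin XG {Ob \<in> topspace XG. q Ob \<in> W}"
    unfolding XG_open eq using top_XG by auto
qed

lemma hom_facts: assumes h: "homeomorphic_map (subtopology X V) (subtopology Y (p ` A)) p"
  and V: "V \<subseteq> topspace X" and A: "A \<subseteq> topspace X"
  shows "p ` V = p ` A" "inj_on p V"
proof -
  have pA: "p ` A \<subseteq> topspace Y" using A contp continuous_map_image_subset_topspace by blast
  have tV: "topspace X \<inter> V = V" using V by blast
  show "p ` V = p ` A" using homeomorphic_imp_surjective_map[OF h] tV pA by auto
  show "inj_on p V" using homeomorphic_imp_injective_map[OF h] tV by simp
qed

lemma Q: assumes At: "A \<subseteq> topspace X"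
  and disj: "pairwise disjnt \<V>" and un: "\<Union>\<V> = {x \<in> topspace X. p x \<in> p ` A}"
  and sh: "\<And>V. V \<in> \<V> \<Longrightarrow> openin X V \<and> homeomorphic_map (subtopology X V) (subtopology Y (p ` A)) p"
  and inv: "\<And>g V. g \<in> G \<Longrightarrow> V \<in> \<V> \<Longrightarrow> g ` V \<in> \<V>"
  shows "pairwise disjnt ((\<lambda>V. orb ` V) ` \<V>)"
    "\<Union>((\<lambda>V. orb ` V) ` \<V>) = {Ob \<in> topspace XG. q Ob \<in> q ` (orb ` A)}"
    "\<And>W. W \<in> (\<lambda>V. orb ` V) ` \<V> \<Longrightarrow> openin XG W \<and> homeomorphic_map (subtopology XG W) (subtopology Y (q ` (orb ` A))) q"
proof -
  have qA: "q ` (orb ` A) = p ` A" using q_img[OF At] .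
  have Vt: "V \<subseteq> topspace X" if "V \<in> \<V>" for V using sh[OF that] openin_subset by blast
  have pV: "p ` V = p ` A" if "V \<in> \<V>" for V using hom_facts(1)[OF conjunct2[OF sh[OF that]] Vt[OF that] At] .
  have iV: "inj_on p V" if "V \<in> \<V>" for V using hom_facts(2)[OF conjunct2[OF sh[OF that]] Vt[OF that] At] .
  show "pairwise disjnt ((\<lambda>V. orb ` V) ` \<V>)"
    unfolding pairwise_def
  proof (intro ballI impI)
    fix B C assume B: "B \<in> (\<lambda>V. orb ` V) ` \<V>" and C: "C \<in> (\<lambda>V. orb ` V) ` \<V>" and ne: "B \<noteq> C"
    obtain V where V: "V \<in> \<V>" "B = orb ` V" using B by blast
    obtain V' where V': "V' \<in> \<V>" "C = orb ` V'" using C by blast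
    show "disjnt B C"
    proof (rule ccontr)
      assume "\<not> disjnt B C"
      then obtain v v' where vv: "v \<in> V" "v' \<in> V'" "orb v = orb v'" using V V' by (auto simp: disjnt_def)
      have vt: "v \<in> topspace X" "v' \<in> topspace X" using vv Vt V V' by auto
      then obtain g where g: "g \<in> G" "v' = g v" using orb_eq vv(3) by metis
      have gV: "g ` V \<in> \<V>" using inv g(1) V(1) by blast
      have "v' \<in> g ` V" using g vv by blast
      then have "\<not> disjnt (g ` V) V'" using vv(2) by (auto simp: disjnt_def)
      then have "g ` V = V'" using disj gV V'(1) unfolding pairwise_def by blast
      moreover have "orb ` (g ` V) = orb ` V"
      proof -
        have "\<forall>x\<in>V. orb (g x) = orb x" using orb_G g(1) Vt[OF V(1)] by blast
        then show ?thesis by (simp add: image_image cong: image_cong)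
      qed
      ultimately have "B = C" using V V' by simp
      then show False using ne by simp
    qed
  qed
  show "\<Union>((\<lambda>V. orb ` V) ` \<V>) = {Ob \<in> topspace XG. q Ob \<in> q ` (orb ` A)}"
  proof
    show "\<Union>((\<lambda>V. orb ` V) ` \<V>) \<subseteq> {Ob \<in> topspace XG. q Ob \<in> q ` (orb ` A)}"
    proof
      fix Ob assume "Ob \<in> \<Union>((\<lambda>V. orb ` V) ` \<V>)"
      then obtain V v where v: "V \<in> \<V>" "v \<in> V" "Ob = orb v" by blast
      then have "v \<in> \<Union>\<V>" by blast
      then have vt: "v \<in> topspace X" and pv: "p v \<in> p ` A" using un by auto
      have "Ob \<in> topspace XG" using top_XG v vt by blast
      moreover have "q Ob \<in> q ` (orb ` A)" using q_orb[OF vt] v pv qA by simp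
      ultimately show "Ob \<in> {Ob \<in> topspace XG. q Ob \<in> q ` (orb ` A)}" by blast
    qed
    show "{Ob \<in> topspace XG. q Ob \<in> q ` (orb ` A)} \<subseteq> \<Union>((\<lambda>V. orb ` V) ` \<V>)"
    proof
      fix Ob assume Ob: "Ob \<in> {Ob \<in> topspace XG. q Ob \<in> q ` (orb ` A)}"
      then obtain x where x: "x \<in> topspace X" "Ob = orb x" using top_XG by blast
      have "p x \<in> p ` A" using Ob x q_orb[OF x(1)] qA by simp
      then have "x \<in> \<Union>\<V>" using un x by blast
      then obtain V where "V \<in> \<V>" "x \<in> V" by blast
      then show "Ob \<in> \<Union>((\<lambda>V. orb ` V) ` \<V>)" using x by blast
    qed
  qed
  fix W assume "W \<in> (\<lambda>V. orb ` V) ` \<V>"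
  then obtain V where V: "V \<in> \<V>" "W = orb ` V" by blast
  have Vo: "openin X V" and hV: "homeomorphic_map (subtopology X V) (subtopology Y (p ` A)) p"
    using sh[OF V(1)] by auto
  have Wo: "openin XG W" using open_orb[OF Vo] V by simp
  have WXG: "W \<subseteq> topspace XG" using Wo openin_subset by blast
  have tW: "topspace (subtopology XG W) = W" using WXG by auto
  have pAY: "p ` A \<subseteq> topspace Y" using At contp continuous_map_image_subset_topspace by blast
  have hW: "homeomorphic_map (subtopology XG W) (subtopology Y (p ` A)) q"
  proof (rule bijective_open_imp_homeomorphic_map)
    show "continuous_map (subtopology XG W) (subtopology Y (p ` A)) q"
    proof (rule continuous_map_into_subtopology[OF continuous_map_from_subtopology[OF q_cont]])
      show "q \<in> topspace (subtopology XG W) \<rightarrow> p ` A"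
      proof
        fix Ob assume "Ob \<in> topspace (subtopology XG W)"
        then obtain v where v: "v \<in> V" "Ob = orb v" using tW V by auto
        then have "v \<in> topspace X" using Vt[OF V(1)] by blast
        then have "q Ob = p v" using q_orb v by simp
        moreover have "p v \<in> p ` A" using v pV[OF V(1)] by blast
        ultimately show "q Ob \<in> p ` A" by simp
      qed
    qed
    show "open_map (subtopology XG W) (subtopology Y (p ` A)) q"
      unfolding open_map_def
    proof (intro allI impI)
      fix W' assume "openin (subtopology XG W) W'"
      then have W': "openin XG W'" "W' \<subseteq> W" using openin_open_subtopology[OF Wo] by auto
      define Ob' where "Ob' = {v \<in> V. orb v \<in> W'}"
      have "openin X Ob'" unfolding Ob'_def by (rule openin_continuous_map_preimage_gen[OF cont_orb Vo W'(1)])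
      then have "openin (subtopology X V) Ob'" using openin_open_subtopology[OF Vo] by (auto simp: Ob'_def)
      then have po: "openin (subtopology Y (p ` A)) (p ` Ob')"
        using homeomorphic_imp_open_map[OF hV] unfolding open_map_def by blast
      have "q ` W' = p ` Ob'"
      proof
        show "q ` W' \<subseteq> p ` Ob'"
        proof
          fix b assume "b \<in> q ` W'"
          then obtain Ob where Ob: "Ob \<in> W'" "b = q Ob" by blast
          then obtain v where v: "v \<in> V" "Ob = orb v" using W' V by blast
          then have "v \<in> Ob'" using Ob by (simp add: Ob'_def)
          moreover have "b = p v" using Ob v q_orb Vt[OF V(1)] by auto
          ultimately show "b \<in> p ` Ob'" by blast
        qed
        show "p ` Ob' \<subseteq> q ` W'"
        proof
          fix b assume "b \<in> p ` Ob'"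
          then obtain v where v: "v \<in> V" "orb v \<in> W'" "b = p v" by (auto simp: Ob'_def)
          then have "b = q (orb v)" using q_orb Vt[OF V(1)] by auto
          then show "b \<in> q ` W'" using v by blast
        qed
      qed
      then show "openin (subtopology Y (p ` A)) (q ` W')" using po by simp
    qed
    have "q ` W = p ` V" using q_img[OF Vt[OF V(1)]] V by simp
    then show "q ` topspace (subtopology XG W) = topspace (subtopology Y (p ` A))"
      using tW pV[OF V(1)] pAY by auto
    show "inj_on q (topspace (subtopology XG W))"
      unfolding tW inj_on_def
    proof (intro ballI impI)
      fix B C assume BC: "B \<in> W" "C \<in> W" "q B = q C"
      obtain b where b: "b \<in> V" "B = orb b" using BC V by blast
      obtain c where c: "c \<in> V" "C = orb c" using BC V by blast
      have "b \<in> topspace X" "c \<in> topspace X" using b c Vt[OF V(1)] by auto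
      then have "p b = p c" using BC(3) b c q_orb by metis
      then have "b = c" using iV[OF V(1)] b c by (meson inj_onD)
      then show "B = C" using b c by simp
    qed
  qed
  show "openin XG W \<and> homeomorphic_map (subtopology XG W) (subtopology Y (q ` (orb ` A))) q"
    using Wo hW qA by simp
qed

lemma Qslice: assumes At: "A \<subseteq> topspace X" and Ao: "openin X A" and AV: "A \<in> \<V>"
  and disj: "pairwise disjnt \<V>" and un: "\<Union>\<V> = {x \<in> topspace X. p x \<in> p ` A}"
  and sh: "\<And>V. V \<in> \<V> \<Longrightarrow> openin X V \<and> homeomorphic_map (subtopology X V) (subtopology Y (p ` A)) p"
  and inv: "\<And>g V. g \<in> G \<Longrightarrow> V \<in> \<V> \<Longrightarrow> g ` V \<in> \<V>"
  shows "slice_of XG Y q (orb ` A)"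
  unfolding slice_of_def
  apply (rule conjI[OF open_orb[OF Ao]])
  apply (rule exI[of _ "(\<lambda>V. orb ` V) ` \<V>"])
  apply (intro conjI)
  using AV apply blast
  using Q[OF At disj un sh inv] by auto

end

context ovl begin

lemma hom_empty: "homeomorphic_map (subtopology X {}) (subtopology Y {}) p"
  by (rule bijective_open_imp_homeomorphic_map) (auto simp: continuous_map_def open_map_def dest: openin_subset)

lemma S_hom: assumes V: "V \<in> S" shows "homeomorphic_map (subtopology X V) (subtopology Y (p ` V)) p"
proof (cases "V = {}")
  case True then show ?thesis using hom_empty by simp
next
  case False then show ?thesis using U_star_hom V by blast
qed

lemma B1: assumes U: "U \<in> S"
  obtains \<V> where "U \<in> \<V>" "\<V> \<subseteq> S" "pairwise disjnt \<V>" "\<Union>\<V> = {x \<in> topspace X. p x \<in> p ` U}"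
    "\<And>V. V \<in> \<V> \<Longrightarrow> openin X V \<and> homeomorphic_map (subtopology X V) (subtopology Y (p ` U)) p"
    "\<And>g V. g \<in> G \<Longrightarrow> V \<in> \<V> \<Longrightarrow> g ` V \<in> \<V>"
proof -
  obtain \<U> where sh: "\<U> \<subseteq> S" "pairwise disjnt \<U>" "\<Union>\<U> = {x \<in> topspace X. p x \<in> p ` U}"
    "\<And>V. V \<in> \<U> \<Longrightarrow> p ` V = p ` U"
    "\<And>W. W \<in> S \<Longrightarrow> W \<noteq> {} \<Longrightarrow> p ` W = p ` U \<Longrightarrow> W \<in> \<U>"
    by (rule sheets[OF U]) blast
  define \<V> where "\<V> = insert U \<U>"
  have pV: "p ` V = p ` U" if "V \<in> \<V>" for V using that sh(4) by (auto simp: \<V>_def)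
  have VS: "\<V> \<subseteq> S" using sh(1) U by (auto simp: \<V>_def)
  have disj: "pairwise disjnt \<V>"
  proof (cases "U = {}")
    case True
    have "\<forall>y. y \<in> \<U> \<and> y \<noteq> {} \<longrightarrow> disjnt {} y \<and> disjnt y {}" by (simp add: disjnt_def)
    then show ?thesis unfolding \<V>_def True pairwise_insert using sh(2) by blast
  next
    case False
    then have "U \<in> \<U>" using sh(5)[OF U] by blast
    then show ?thesis using sh(2) by (simp add: \<V>_def insert_absorb)
  qed
  have un: "\<Union>\<V> = {x \<in> topspace X. p x \<in> p ` U}"
    using sh(3) S_sub[OF U] by (auto simp: \<V>_def)
  have hm: "openin X V \<and> homeomorphic_map (subtopology X V) (subtopology Y (p ` U)) p" if V: "V \<in> \<V>" for V
  proof -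
    have VS1: "V \<in> S" using V VS by blast
    show ?thesis using S_open[OF VS1] S_hom[OF VS1] pV[OF V] by simp
  qed
  have inv: "g ` V \<in> \<V>" if g: "g \<in> G" and V: "V \<in> \<V>" for g V
  proof (cases "V = {}")
    case True then show ?thesis using V by simp
  next
    case False
    have VS1: "V \<in> S" using V VS by blast
    have "g ` V \<in> S" using G_S g VS1 by blast
    moreover have "g ` V \<noteq> {}" using False by simp
    moreover have "p ` (g ` V) = p ` U" using G_pimg[OF g S_sub[OF VS1]] pV[OF V] by simp
    ultimately show ?thesis using sh(5) by (simp add: \<V>_def)
  qed
  show ?thesis
    by (rule that[OF _ VS disj un hm inv]) (simp add: \<V>_def)
qed

lemma star_XG: assumes x: "x \<in> topspace X"
  shows "star (orb x) {orb ` U |U. U \<in> S} = orb ` (star x S)"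
proof
  show "star (orb x) {orb ` U |U. U \<in> S} \<subseteq> orb ` (star x S)"
  proof
    fix z assume "z \<in> star (orb x) {orb ` U |U. U \<in> S}"
    then obtain W where W: "W \<in> {orb ` U |U. U \<in> S}" "orb x \<in> W" "z \<in> W" unfolding star_def by blast
    then obtain U where U0: "U \<in> S" "W = orb ` U" by blast
    then have U: "U \<in> S" "orb x \<in> orb ` U" "z \<in> orb ` U" using W by auto
    obtain u where u: "u \<in> U" "orb x = orb u" using U by blast
    obtain v where v: "v \<in> U" "z = orb v" using U by blast
    have ut: "u \<in> topspace X" "v \<in> topspace X" using u v S_sub U by auto
    obtain g where g: "g \<in> G" "x = g u" using orb_eq[OF ut(1) x] u by metis
    have gU: "g ` U \<in> S" using G_S g U by blast
    have "x \<in> g ` U" using g u by blast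
    then have "g ` U \<subseteq> star x S" using star_mem gU by blast
    then have "g v \<in> star x S" using v by blast
    moreover have "orb (g v) = z" using orb_G[OF g(1) ut(2)] v by simp
    ultimately show "z \<in> orb ` (star x S)" by blast
  qed
  show "orb ` (star x S) \<subseteq> star (orb x) {orb ` U |U. U \<in> S}"
  proof
    fix z assume "z \<in> orb ` (star x S)"
    then obtain v where v: "v \<in> star x S" "z = orb v" by blast
    then obtain U where U0: "U \<in> S" "x \<in> U" "v \<in> U" unfolding star_def by blast
    then have U: "U \<in> S" "x \<in> U" "v \<in> U" "z = orb v" using v by auto
    have "orb ` U \<in> {orb ` U |U. U \<in> S}" using U by blast
    moreover have "orb x \<in> orb ` U" "z \<in> orb ` U" using U by auto
    ultimately show "z \<in> star (orb x) {orb ` U |U. U \<in> S}" unfolding star_def by blast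
  qed
qed

end

context ovl begin

lemma B3: assumes x: "x \<in> topspace X" shows "slice_of XG Y q (orb ` star x S)"
proof -
  define F where "F = {y \<in> topspace X. p y = p x}"
  define Wy where "Wy y = \<Union>{V \<in> S. y \<in> V \<and> (\<exists>U\<in>S. x \<in> U \<and> p ` V = p ` U)}" for y
  define A where "A = star x S"
  have At: "A \<subseteq> topspace X" unfolding A_def by (rule star_sub)
  have Ao: "openin X A" unfolding A_def star_def by (rule openin_Union) (simp add: S_open)
  have Wy_mem: "z \<in> Wy y \<longleftrightarrow> (\<exists>V U. V \<in> S \<and> y \<in> V \<and> U \<in> S \<and> x \<in> U \<and> p ` V = p ` U \<and> z \<in> V)" for z y
    unfolding Wy_def by blast
  have Wy_sub: "Wy y \<subseteq> topspace X" for y using S_sub unfolding Wy_def by blast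
  have Wy_star: "Wy y \<subseteq> star y S" for y unfolding Wy_def star_def by blast
  have Wy_open: "openin X (Wy y)" for y unfolding Wy_def by (rule openin_Union) (simp add: S_open)
  have Wyx: "Wy x = A"
  proof
    show "Wy x \<subseteq> A" using Wy_star unfolding A_def by blast
    show "A \<subseteq> Wy x"
    proof
      fix z assume "z \<in> A"
      then obtain U where U: "U \<in> S" "x \<in> U" "z \<in> U" unfolding A_def star_def by blast
      then show "z \<in> Wy x" unfolding Wy_mem by blast
    qed
  qed
  have xF: "x \<in> F" using x by (simp add: F_def)
  have through: "\<exists>V. V \<in> S \<and> y \<in> V \<and> p ` V = p ` U" if U: "U \<in> S" "x \<in> U" and y: "y \<in> topspace X" "p y = p x" for U y
  proof -
    obtain \<U> where sh: "\<U> \<subseteq> S" "\<Union>\<U> = {x \<in> topspace X. p x \<in> p ` U}"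
      "\<And>V. V \<in> \<U> \<Longrightarrow> p ` V = p ` U"
      by (rule sheets[OF U(1)]) blast
    have "y \<in> \<Union>\<U>" using sh(2) y U by auto
    then obtain V where "V \<in> \<U>" "y \<in> V" by blast
    then show ?thesis using sh by blast
  qed
  have pWy: "p ` Wy y = p ` A" if y: "y \<in> F" for y
  proof
    show "p ` Wy y \<subseteq> p ` A"
    proof
      fix b assume "b \<in> p ` Wy y"
      then obtain z where z: "z \<in> Wy y" "b = p z" by blast
      then obtain V U where VU: "V \<in> S" "U \<in> S" "x \<in> U" "p ` V = p ` U" "z \<in> V" unfolding Wy_mem by blast
      have "U \<subseteq> A" unfolding A_def using star_mem VU by blast
      then show "b \<in> p ` A" using VU z by blast
    qed
    show "p ` A \<subseteq> p ` Wy y"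
    proof
      fix b assume "b \<in> p ` A"
      then obtain w U where wU: "U \<in> S" "x \<in> U" "w \<in> U" "b = p w" unfolding A_def star_def by blast
      obtain V where V: "V \<in> S" "y \<in> V" "p ` V = p ` U" using through[OF wU(1,2)] y by (auto simp: F_def)
      have "V \<subseteq> Wy y" unfolding Wy_def using V wU by blast
      moreover have "b \<in> p ` V" using V wU by blast
      ultimately show "b \<in> p ` Wy y" by blast
    qed
  qed
  have disj: "pairwise disjnt (Wy ` F)"
    unfolding pairwise_def
  proof (intro ballI impI)
    fix B C assume B: "B \<in> Wy ` F" and C: "C \<in> Wy ` F" and ne: "B \<noteq> C"
    obtain y where y: "y \<in> F" "B = Wy y" using B by blast
    obtain y' where y': "y' \<in> F" "C = Wy y'" using C by blast
    show "disjnt B C"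
    proof (rule ccontr)
      assume "\<not> disjnt B C"
      then obtain z where z: "z \<in> Wy y" "z \<in> Wy y'" using y y' by (auto simp: disjnt_def)
      obtain V U where V: "V \<in> S" "y \<in> V" "z \<in> V" using z(1) unfolding Wy_mem by blast
      obtain V' U' where V': "V' \<in> S" "y' \<in> V'" "z \<in> V'" using z(2) unfolding Wy_mem by blast
      have zt: "z \<in> topspace X" using V S_sub by blast
      have "y \<in> star z S" "y' \<in> star z S" using star_mem V V' by blast+
      moreover have "p y = p y'" using y y' by (simp add: F_def)
      ultimately have "y = y'" using inj_onD[OF star_inj[OF zt]] by blast
      then show False using ne y y' by simp
    qed
  qed
  have un: "\<Union>(Wy ` F) = {z \<in> topspace X. p z \<in> p ` A}"
  proof
    show "\<Union>(Wy ` F) \<subseteq> {z \<in> topspace X. p z \<in> p ` A}"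
      using Wy_sub pWy by blast
    show "{z \<in> topspace X. p z \<in> p ` A} \<subseteq> \<Union>(Wy ` F)"
    proof
      fix z assume "z \<in> {z \<in> topspace X. p z \<in> p ` A}"
      then have zt: "z \<in> topspace X" and "p z \<in> p ` A" by auto
      then obtain w U where wU: "U \<in> S" "x \<in> U" "w \<in> U" "p z = p w" unfolding A_def star_def by blast
      obtain \<U> where sh: "\<U> \<subseteq> S" "\<Union>\<U> = {x \<in> topspace X. p x \<in> p ` U}"
        "\<And>V. V \<in> \<U> \<Longrightarrow> p ` V = p ` U"
        by (rule sheets[OF wU(1)]) blast
      have "z \<in> \<Union>\<U>" using sh(2) zt wU by auto
      then obtain V where V: "V \<in> \<U>" "z \<in> V" by blast
      have VS: "V \<in> S" and pV: "p ` V = p ` U" using V sh by auto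
      have "p x \<in> p ` V" using pV wU by blast
      then obtain y where y: "y \<in> V" "p y = p x" by auto
      have yF: "y \<in> F" using y VS S_sub by (auto simp: F_def)
      have "z \<in> Wy y" unfolding Wy_mem using VS y V wU pV by blast
      then show "z \<in> \<Union>(Wy ` F)" using yF by blast
    qed
  qed
  have sh: "openin X V \<and> homeomorphic_map (subtopology X V) (subtopology Y (p ` A)) p" if V: "V \<in> Wy ` F" for V
  proof -
    obtain y where y: "y \<in> F" "V = Wy y" using V by blast
    have yt: "y \<in> topspace X" using y by (simp add: F_def)
    have "homeomorphic_map (subtopology X (Wy y)) (subtopology Y (p ` Wy y)) p"
      by (rule sub_star_hom[OF yt Wy_star])
    then show ?thesis using Wy_open[of y] pWy[OF y(1)] y(2) by simp
  qed
  have incl: "g ` Wy y \<subseteq> Wy (g y)" if g: "g \<in> G" for g y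
  proof
    fix z assume "z \<in> g ` Wy y"
    then obtain v where v: "v \<in> Wy y" "z = g v" by blast
    then obtain V U where VU: "V \<in> S" "y \<in> V" "U \<in> S" "x \<in> U" "p ` V = p ` U" "v \<in> V" unfolding Wy_mem by blast
    have "g ` V \<in> S" using G_S g VU by blast
    moreover have "p ` (g ` V) = p ` U" using G_pimg[OF g S_sub[OF VU(1)]] VU by simp
    moreover have "g y \<in> g ` V" "z \<in> g ` V" using VU v by auto
    ultimately show "z \<in> Wy (g y)" unfolding Wy_mem
      apply -
      apply (rule exI[of _ "g ` V"], rule exI[of _ U])
      using VU by simp
  qed
  have inv: "g ` V \<in> Wy ` F" if g: "g \<in> G" and V: "V \<in> Wy ` F" for g V
  proof -
    obtain y where y: "y \<in> F" "V = Wy y" using V by blast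
    have yt: "y \<in> topspace X" using y by (simp add: F_def)
    obtain k where k: "k \<in> G" "\<And>x. x \<in> topspace X \<Longrightarrow> k (g x) = x" "\<And>x. x \<in> topspace X \<Longrightarrow> g (k x) = x"
      using G_inv[OF g] by metis
    have "Wy (g y) \<subseteq> g ` Wy y"
    proof
      fix z assume z: "z \<in> Wy (g y)"
      then have "k z \<in> k ` Wy (g y)" by blast
      also have "\<dots> \<subseteq> Wy (k (g y))" by (rule incl[OF k(1)])
      finally have "k z \<in> Wy y" using k(2)[OF yt] by simp
      moreover have "z \<in> topspace X" using z Wy_sub by blast
      then have "z = g (k z)" using k(3) by simp
      ultimately show "z \<in> g ` Wy y" by blast
    qed
    then have "g ` Wy y = Wy (g y)" using incl[OF g, of y] by (rule subset_antisym[rotated])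
    then have "g ` V = Wy (g y)" using y(2) by simp
    moreover have "g y \<in> F" using y G_top[OF g yt] G_p[OF g yt] by (simp add: F_def)
    ultimately show ?thesis by (rule image_eqI)
  qed
  have AV: "A \<in> Wy ` F" using Wyx xF by blast
  show ?thesis using Qslice[OF At Ao AV disj un sh inv] unfolding A_def .
qed

lemma partB: "overlay_with XG Y q {orb ` U |U. U \<in> S}"
proof -
  let ?S' = "{orb ` U |U. U \<in> S}"
  have sl: "slice_of XG Y q W" if W: "W \<in> ?S'" for W
  proof -
    obtain U where U: "U \<in> S" "W = orb ` U" using W by blast
    obtain \<V> where V: "U \<in> \<V>" "\<V> \<subseteq> S" "pairwise disjnt \<V>" "\<Union>\<V> = {x \<in> topspace X. p x \<in> p ` U}"
      "\<And>V. V \<in> \<V> \<Longrightarrow> openin X V \<and> homeomorphic_map (subtopology X V) (subtopology Y (p ` U)) p"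
      "\<And>g V. g \<in> G \<Longrightarrow> V \<in> \<V> \<Longrightarrow> g ` V \<in> \<V>"
      by (rule B1[OF U(1)]) blast
    show ?thesis using Qslice[OF S_sub[OF U(1)] S_open[OF U(1)] V(1) V(3) V(4) V(5) V(6)] U(2) by simp
  qed
  have cv: "\<exists>\<U>. \<U> \<subseteq> ?S' \<and> pairwise disjnt \<U> \<and>
        \<Union>\<U> = {x \<in> topspace XG. q x \<in> q ` W} \<and>
        (\<forall>V\<in>\<U>. homeomorphic_map (subtopology XG V) (subtopology Y (q ` W)) q)" if W: "W \<in> ?S'" for W
  proof -
    obtain U where U: "U \<in> S" "W = orb ` U" using W by blast
    obtain \<V> where V: "U \<in> \<V>" "\<V> \<subseteq> S" "pairwise disjnt \<V>" "\<Union>\<V> = {x \<in> topspace X. p x \<in> p ` U}"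
      "\<And>V. V \<in> \<V> \<Longrightarrow> openin X V \<and> homeomorphic_map (subtopology X V) (subtopology Y (p ` U)) p"
      "\<And>g V. g \<in> G \<Longrightarrow> V \<in> \<V> \<Longrightarrow> g ` V \<in> \<V>"
      by (rule B1[OF U(1)]) blast
    note QQ = Q[OF S_sub[OF U(1)] V(3) V(4) V(5) V(6)]
    have sub: "(\<lambda>V. orb ` V) ` \<V> \<subseteq> ?S'" using V(2) by blast
    show ?thesis
      apply (rule exI[of _ "(\<lambda>V. orb ` V) ` \<V>"])
      apply (intro conjI ballI)
      using sub apply blast
      using QQ(1) apply blast
      using QQ(2) U(2) apply simp
      using QQ(3) U(2) by simp
  qed
  have cover: "\<Union>?S' = topspace XG"
  proof
    show "\<Union>?S' \<subseteq> topspace XG" using top_XG S_sub by blast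
    show "topspace XG \<subseteq> \<Union>?S'"
    proof
      fix Ob assume "Ob \<in> topspace XG"
      then obtain x where x: "x \<in> topspace X" "Ob = orb x" using top_XG by blast
      then obtain U where "U \<in> S" "x \<in> U" using S_cover by blast
      then show "Ob \<in> \<Union>?S'" using x by blast
    qed
  qed
  have cs: "covering_structure XG Y q ?S'"
    unfolding covering_structure_def
    apply (intro conjI ballI)
      apply (erule sl)
     apply (rule cover)
    apply (erule cv)
    done
  have st: "slice_of XG Y q (star Ob ?S')" if Ob: "Ob \<in> topspace XG" for Ob
  proof -
    obtain x where x: "x \<in> topspace X" "Ob = orb x" using Ob top_XG by blast
    show ?thesis using B3[OF x(1)] star_XG[OF x(1)] x(2) by simp
  qed
  show ?thesis unfolding overlay_with_def overlay_structure_def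
    by (intro conjI ballI q_cont cs st)
qed

end

theorem proposition5p5:
  fixes X :: "'a topology" and Y :: "'b topology" and p :: "'a \<Rightarrow> 'b" and \<S> :: "'a set set"
  assumes "overlay_with X Y p \<S>"
    and "connected_space X"
  shows "overlay_action X (deck_preserving X p \<S>) \<S> \<and>
         (\<exists>q. (\<forall>x\<in>topspace X. p x = q (orbit_of (deck_preserving X p \<S>) x)) \<and>
              overlay_with (orbit_space X (deck_preserving X p \<S>)) Y q
                {orbit_of (deck_preserving X p \<S>) ` U |U. U \<in> \<S>})"
proof -
  interpret ovl X Y p \<S> using assms by unfold_locales
  have "\<forall>x\<in>topspace X. p x = qmap p (orbit_of (deck_preserving X p \<S>) x)"
    using q_orb by simp
  then show ?thesis using partA partB by blast
qed


end
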